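(* Let $q\in\mathbb{N}$ be odd and square-free. Then if $Q$ is an integral ternary quadratic form with $\gcd(\det(Q),q)=1$ we have \[m(Q;q)\ll q^{1/2}\,\widehat{m}(-Q^{\mathrm{adj}};q)^{1/2},\] with an absolute implied constant. In particular one has \[B_3^*(q)\ll q^{1/2}\,\widehat{B}_3(q)^{1/2}.\]
   Context: $\|\cdot\|$ is the Euclidean norm. Since $q$ is odd, an integral quadratic form $Q$ in $n$ variables is represented modulo $q$ by a symmetric integer matrix $M$ (so $Q(\mathbf{x})\equiv\mathbf{x}^TM\mathbf{x}\pmod q$); $\det(Q)$ means $\det(M)$, and $Q^{\mathrm{adj}}$ denotes the quadratic form with matrix the adjugate matrix of $M$, so $-Q^{\mathrm{adj}}$ is the form $\mathbf{y}\mapsto-\mathbf{y}^T\mathrm{adj}(M)\mathbf{y}$. Define $m(Q;q):=\min\{\|\mathbf{x}\|:\ \mathbf{x}\in\mathbb{Z}^n\setminus\{\mathbf{0}\},\ Q(\mathbf{x})\equiv0\pmod q\}$ and $\widehat{m}(Q;q):=\min\{\|\mathbf{x}\|:\ \mathbf{x}\in\mathbb{Z}^n\setminus\{\mathbf{0}\},\ \exists t\in\mathbb{Z},\ Q(\mathbf{x})\equiv t^2\pmod q\}$. Define $B_3^*(q):=\max_Q m(Q;q)$ over integral ternary forms $Q$ with $\gcd(\det(Q),q)=1$, and $\widehat{B}_n(q):=\max_Q\widehat{m}(Q;q)$ over integral quadratic forms $Q$ in $n$ variables with $\gcd(\det(Q),q)=1$. *)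

theory Defs
  imports "HOL-Analysis.Analysis" "HOL-Computational_Algebra.Squarefree" "HOL-Number_Theory.Cong"
begin

definition qform :: "int^'n^'n \<Rightarrow> int^'n \<Rightarrow> int" where
  "qform M x = (\<Sum>i\<in>UNIV. \<Sum>j\<in>UNIV. M$i$j * x$i * x$j)"

definition adjugate :: "int^'n^'n \<Rightarrow> int^'n^'n" where
  "adjugate M = (\<chi> i j. det (\<chi> k l. if k = j then (if l = i then 1 else 0) else M$k$l))"

definition inorm :: "int^'n \<Rightarrow> real" where
  "inorm x = sqrt (\<Sum>i\<in>UNIV. (real_of_int (x$i))^2)"

definition mQ :: "int^'n^'n \<Rightarrow> nat \<Rightarrow> real" where
  "mQ M q = Inf {inorm x | x. x \<noteq> 0 \<and> [qform M x = 0] (mod int q)}"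

definition mhatQ :: "int^'n^'n \<Rightarrow> nat \<Rightarrow> real" where
  "mhatQ M q = Inf {inorm x | x. x \<noteq> 0 \<and> (\<exists>t::int. [qform M x = t^2] (mod int q))}"

definition admissible :: "int^'n^'n \<Rightarrow> nat \<Rightarrow> bool" where
  "admissible M q \<longleftrightarrow> transpose M = M \<and> coprime (det M) (int q)"

definition B3star :: "nat \<Rightarrow> real" where
  "B3star q = Sup {mQ (M::int^3^3) q | M. admissible M q}"

definition Bhat3 :: "nat \<Rightarrow> real" where
  "Bhat3 q = Sup {mhatQ (M::int^3^3) q | M. admissible M q}"

end

theory Submission
  imports Defs
begin


definition cross3 :: "int^3 \<Rightarrow> int^3 \<Rightarrow> int^3" where
  "cross3 a b = vector [a$2*b$3 - a$3*b$2, a$3*b$1 - a$1*b$3, a$1*b$2 - a$2*b$1]"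

definition idot :: "int^3 \<Rightarrow> int^3 \<Rightarrow> int" where
  "idot a b = a$1*b$1 + a$2*b$2 + a$3*b$3"

definition bil :: "int^3^3 \<Rightarrow> int^3 \<Rightarrow> int^3 \<Rightarrow> int" where
  "bil M x z = (\<Sum>i\<in>UNIV. \<Sum>j\<in>UNIV. M$i$j * x$i * z$j)"

lemma cross3_comp [simp]:
  "cross3 a b $ 1 = a$2*b$3 - a$3*b$2"
  "cross3 a b $ 2 = a$3*b$1 - a$1*b$3"
  "cross3 a b $ 3 = a$1*b$2 - a$2*b$1"
  by (simp_all add: cross3_def)

lemma qform3: "qform (M::int^3^3) x =
   M$1$1*x$1*x$1 + M$1$2*x$1*x$2 + M$1$3*x$1*x$3 +
   M$2$1*x$2*x$1 + M$2$2*x$2*x$2 + M$2$3*x$2*x$3 +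
   M$3$1*x$3*x$1 + M$3$2*x$3*x$2 + M$3$3*x$3*x$3"
  unfolding qform_def by (simp add: sum_3 algebra_simps)

lemma bil3: "bil (M::int^3^3) x z =
   M$1$1*x$1*z$1 + M$1$2*x$1*z$2 + M$1$3*x$1*z$3 +
   M$2$1*x$2*z$1 + M$2$2*x$2*z$2 + M$2$3*x$2*z$3 +
   M$3$1*x$3*z$1 + M$3$2*x$3*z$2 + M$3$3*x$3*z$3"
  unfolding bil_def by (simp add: sum_3 algebra_simps)

lemma adj3:
  fixes M :: "int^3^3"
  shows "adjugate M $1$1 = M$2$2*M$3$3 - M$2$3*M$3$2"
    "adjugate M $1$2 = M$1$3*M$3$2 - M$1$2*M$3$3"
    "adjugate M $1$3 = M$1$2*M$2$3 - M$1$3*M$2$2"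
    "adjugate M $2$1 = M$2$3*M$3$1 - M$2$1*M$3$3"
    "adjugate M $2$2 = M$1$1*M$3$3 - M$1$3*M$3$1"
    "adjugate M $2$3 = M$1$3*M$2$1 - M$1$1*M$2$3"
    "adjugate M $3$1 = M$2$1*M$3$2 - M$2$2*M$3$1"
    "adjugate M $3$2 = M$1$2*M$3$1 - M$1$1*M$3$2"
    "adjugate M $3$3 = M$1$1*M$2$2 - M$1$2*M$2$1"
  unfolding adjugate_def by (simp_all add: det_3 algebra_simps)


lemma gram_raw:
  fixes ma mb mc md me mf u1 u2 u3 v1 v2 v3 w1 w2 w3 :: int
  assumes h: "w1 = u2* v3 - u3* v2" "w2 = u3* v1 - u1* v3" "w3 = u1* v2 - u2* v1"
  shows "(ma*u1*u1 + md*u1*u2 + me*u1*u3 + md*u2*u1 + mb*u2*u2 + mf*u2*u3 + me*u3*u1 + mf*u3*u2 + mc*u3*u3) *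
         (ma* v1* v1 + md* v1* v2 + me* v1* v3 + md* v2* v1 + mb* v2* v2 + mf* v2* v3 + me* v3* v1 + mf* v3* v2 + mc* v3* v3) -
         (ma*u1* v1 + md*u1* v2 + me*u1* v3 + md*u2* v1 + mb*u2* v2 + mf*u2* v3 + me*u3* v1 + mf*u3* v2 + mc*u3* v3)^2
  = (mb*mc - mf*mf)*w1*w1 + (me*mf - md*mc)*w1*w2 + (md*mf - me*mb)*w1*w3 + (mf*me-md*mc)*w2*w1 + (ma*mc-me*me)*w2*w2
    + (me*md - ma*mf)*w2*w3 + (md*mf - mb*me)*w3*w1 + (md*me-ma*mf)*w3*w2 + (ma*mb-md*md)*w3*w3"
  unfolding h power2_eq_square by (simp add: algebra_simps)


definition symm3 :: "int^3^3 \<Rightarrow> bool" where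
  "symm3 M \<longleftrightarrow> M$1$2 = M$2$1 \<and> M$1$3 = M$3$1 \<and> M$2$3 = M$3$2"

lemma transpose_symm3:
  assumes "transpose M = (M::int^3^3)" shows "symm3 M"
proof -
  have *: "M$j$i = M$i$j" for i j
  proof -
    have "transpose M $i$j = M$i$j" using assms by simp
    thus ?thesis by (simp add: transpose_def)
  qed
  show ?thesis unfolding symm3_def by (simp add: *)
qed

lemma gram:
  assumes "symm3 M"
  shows "qform M u * qform M v - (bil M u v)^2 = qform (adjugate M) (cross3 u v)"
proof -
  have s: "M$2$1 = M$1$2" "M$3$1 = M$1$3" "M$3$2 = M$2$3" using assms unfolding symm3_def by auto
  show ?thesis unfolding qform3 bil3 adj3 cross3_comp s
    by (rule gram_raw) simp_all
qed

lemma qform_neg: "qform (- N) x = - qform (N::int^3^3) x"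
  unfolding qform3 by simp

lemma qform_smult: "qform M (c *s x) = c^2 * qform (M::int^3^3) x"
  unfolding qform3 power2_eq_square by (simp add: algebra_simps)



lemma comb_raw:
  fixes ma mb mc md me mf u1 u2 u3 v1 v2 v3 al be :: int
  shows "ma*(al*u1+be* v1)*(al*u1+be* v1) + md*(al*u1+be* v1)*(al*u2+be* v2) + me*(al*u1+be* v1)*(al*u3+be* v3) +
   md*(al*u2+be* v2)*(al*u1+be* v1) + mb*(al*u2+be* v2)*(al*u2+be* v2) + mf*(al*u2+be* v2)*(al*u3+be* v3) +
   me*(al*u3+be* v3)*(al*u1+be* v1) + mf*(al*u3+be* v3)*(al*u2+be* v2) + mc*(al*u3+be* v3)*(al*u3+be* v3)
  = al*al*(ma*u1*u1 + md*u1*u2 + me*u1*u3 + md*u2*u1 + mb*u2*u2 + mf*u2*u3 + me*u3*u1 + mf*u3*u2 + mc*u3*u3)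
   + 2*al*be*(ma*u1 * v1 + md*u1 * v2 + me*u1 * v3 + md*u2 * v1 + mb*u2 * v2 + mf*u2 * v3 + me*u3 * v1 + mf*u3 * v2 + mc*u3 * v3)
   + be*be*(ma * v1 * v1 + md * v1 * v2 + me * v1 * v3 + md * v2 * v1 + mb * v2 * v2 + mf * v2 * v3 + me * v3 * v1 + mf * v3 * v2 + mc * v3 * v3)"
  by (simp add: algebra_simps)

lemma qform_comb:
  assumes "symm3 M"
  shows "qform M (al *s u + be *s v) = al^2 * qform M u + 2*al*be * bil M u v + be^2 * qform M v"
proof -
  have s: "M$2$1 = M$1$2" "M$3$1 = M$1$3" "M$3$2 = M$2$3" using assms unfolding symm3_def by auto
  show ?thesis unfolding qform3 bil3 s power2_eq_square
    by (simp only: vector_add_component vector_smult_component comb_raw)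
qed



lemma mult_adj: "M ** adjugate M = mat (det M)" for M :: "int^3^3"
proof -
  have "(M ** adjugate M) $ i $ j = mat (det M) $ i $ j" for i j
    unfolding matrix_matrix_mult_def mat_def
    using exhaust_3[of i] exhaust_3[of j]
    by (auto simp: sum_3 adj3 det_3 algebra_simps)
  thus ?thesis by (simp add: vec_eq_iff)
qed

lemma det_scal: "det (mat (c::int) :: int^3^3) = c^3"
  by (simp add: det_3 mat_def power3_eq_cube)

lemma det_adj_mult: "det M * det (adjugate M) = (det M)^3" for M :: "int^3^3"
  by (metis det_mul mult_adj det_scal)



lemma lagrange: "cross3 x (cross3 a y) = idot x y *s a - idot x a *s y"
  by (simp add: vec_eq_iff forall_3 idot_def algebra_simps)

lemma cross_cross: "cross3 (cross3 w b) y = idot w y *s b - idot b y *s w"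
  by (simp add: vec_eq_iff forall_3 idot_def algebra_simps)

lemma cross_lin2: "cross3 x (s *s b - r *s w) = s *s cross3 x b - r *s cross3 x w"
  by (simp add: vec_eq_iff forall_3 algebra_simps)

lemma cross_lin: "cross3 u (al *s u + be *s v) = be *s cross3 u v"
  by (simp add: vec_eq_iff forall_3 algebra_simps)

lemma cross_anti: "cross3 u w = - cross3 w u"
  by (simp add: vec_eq_iff forall_3 algebra_simps)

lemma idot_lin: "idot (al *s u + be *s v) y = al * idot u y + be * idot v y"
  by (simp add: idot_def algebra_simps)

lemma plane_basis: "\<exists>u v. idot u y = 0 \<and> idot v y = 0 \<and> cross3 u v = y$k *s y"
proof -
  have "k = 1 \<or> k = 2 \<or> k = 3" by (rule exhaust_3)
  moreover
  { assume k: "k = 1"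
    let ?u = "vector [-y$3, 0, y$1] :: int^3" and ?v = "vector [y$2, -y$1, 0] :: int^3"
    have "idot ?u y = 0 \<and> idot ?v y = 0 \<and> cross3 ?u ?v = y$k *s y"
      using k by (simp add: idot_def vec_eq_iff forall_3 algebra_simps)
    hence ?thesis by blast }
  moreover
  { assume k: "k = 2"
    let ?u = "vector [y$2, -y$1, 0] :: int^3" and ?v = "vector [0, y$3, -y$2] :: int^3"
    have "idot ?u y = 0 \<and> idot ?v y = 0 \<and> cross3 ?u ?v = y$k *s y"
      using k by (simp add: idot_def vec_eq_iff forall_3 algebra_simps)
    hence ?thesis by blast }
  moreover
  { assume k: "k = 3"
    let ?u = "vector [0, y$3, -y$2] :: int^3" and ?v = "vector [-y$3, 0, y$1] :: int^3"
    have "idot ?u y = 0 \<and> idot ?v y = 0 \<and> cross3 ?u ?v = y$k *s y"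
      using k by (simp add: idot_def vec_eq_iff forall_3 algebra_simps)
    hence ?thesis by blast }
  ultimately show ?thesis by blast
qed

lemma dvd_cross: assumes "\<forall>i. p dvd u$i" shows "(p::int) dvd (cross3 u v)$i"
proof -
  have "p dvd u$1" "p dvd u$2" "p dvd u$3" using assms by auto
  thus ?thesis using exhaust_3[of i] by auto
qed

lemma iso_exists:
  assumes p: "prime (p::int)" and sM: "symm3 M" and yk: "\<not> p dvd y$k"
    and sq: "p dvd (qform (- adjugate M) y - t^2)"
  shows "\<exists>w. (\<exists>j. \<not> p dvd w$j) \<and> idot w y = 0 \<and> p dvd qform M w"
proof -
  obtain u v where uv: "idot u y = 0" "idot v y = 0" "cross3 u v = y$k *s y"
    using plane_basis by blast
  define c where "c = y$k"
  define A0 where "A0 = qform M u"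
  define B0 where "B0 = bil M u v"
  define C0 where "C0 = qform M v"
  define r where "r = c * t"
  have g: "A0 * C0 - B0^2 = c^2 * qform (adjugate M) y"
    unfolding A0_def B0_def C0_def using gram[OF sM, of u v] uv(3) qform_smult c_def by simp
  have "B0^2 - A0*C0 - r^2 = c^2 * (qform (- adjugate M) y - t^2)"
    using g unfolding qform_neg r_def by (simp add: algebra_simps power2_eq_square)
  hence disc: "p dvd (B0^2 - A0*C0 - r^2)" using sq by simp
  have nzc: "\<not> p dvd c * c" using yk p c_def by (simp add: prime_dvd_mult_iff)
  have ck: "(cross3 u v)$k = c * c" using uv(3) c_def by simp
  show ?thesis
  proof (cases "p dvd A0")
    case True
    have "\<not> (\<forall>i. p dvd u$i)"
    proof
      assume "\<forall>i. p dvd u$i"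
      hence "p dvd (cross3 u v)$k" by (rule dvd_cross)
      thus False using ck nzc by simp
    qed
    thus ?thesis using True uv(1) unfolding A0_def by blast
  next
    case False
    define w where "w = (r - B0) *s u + A0 *s v"
    have qw: "qform M w = - A0 * (B0^2 - A0*C0 - r^2)"
      unfolding w_def qform_comb[OF sM] A0_def[symmetric] B0_def[symmetric] C0_def[symmetric]
      by (simp add: algebra_simps power2_eq_square)
    have iw: "idot w y = 0" unfolding w_def idot_lin uv by simp
    have cw: "cross3 u w = A0 *s cross3 u v" unfolding w_def cross_lin ..
    have "\<not> (\<forall>i. p dvd w$i)"
    proof
      assume "\<forall>i. p dvd w$i"
      hence "p dvd (cross3 w u)$k" by (rule dvd_cross)
      hence "p dvd (cross3 u w)$k" by (subst cross_anti) simp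
      hence "p dvd A0 * (c * c)" using cw ck by simp
      thus False using False nzc p by (simp add: prime_dvd_mult_iff)
    qed
    moreover have "p dvd qform M w" unfolding qw using disc by simp
    ultimately show ?thesis using iw by blast
  qed
qed



lemma qform_key:
  "w$j^2 * qform M x - x$j^2 * qform M w =
   (\<Sum>i\<in>UNIV. \<Sum>l\<in>UNIV. M$i$l * ((x$i*w$j)*(x$l*w$j - x$j*w$l) + x$j*w$l*(x$i*w$j - x$j*w$i)))"
  unfolding qform_def sum_distrib_left sum_subtractf[symmetric]
  by (intro sum.cong refl) (simp add: algebra_simps power2_eq_square)

lemma line_cond:
  assumes p: "prime (p::int)" and wj: "\<not> p dvd w$j" and wy: "p dvd idot w y"
    and qw: "p dvd qform M w" and hb: "\<not> p dvd idot b y"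
    and xy: "p dvd idot x y" and xa: "p dvd idot x (cross3 w b)"
  shows "p dvd qform M x"
proof -
  let ?a = "cross3 w b"
  have cxw: "p dvd (cross3 x w)$i" for i
  proof -
    have e: "cross3 x (cross3 ?a y) = idot w y *s cross3 x b - idot b y *s cross3 x w"
      unfolding cross_cross cross_lin2 ..
    have "p dvd (cross3 x (cross3 ?a y))$i" unfolding lagrange using xy xa by simp
    hence "p dvd idot w y * (cross3 x b)$i - idot b y * (cross3 x w)$i" unfolding e by simp
    moreover have "p dvd idot w y * (cross3 x b)$i" using wy by simp
    ultimately have "p dvd idot w y * (cross3 x b)$i - (idot w y * (cross3 x b)$i - idot b y * (cross3 x w)$i)"
      by (rule dvd_diff[rotated])
    hence "p dvd idot b y * (cross3 x w)$i" by simp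
    thus ?thesis using hb p by (simp add: prime_dvd_mult_iff)
  qed
  have D: "p dvd x$i*w$l - x$l*w$i" for i l
  proof -
    have c1: "p dvd x$2*w$3 - x$3*w$2" using cxw[of 1] by simp
    have c2: "p dvd x$3*w$1 - x$1*w$3" using cxw[of 2] by simp
    have c3: "p dvd x$1*w$2 - x$2*w$1" using cxw[of 3] by simp
    have c1': "p dvd x$3*w$2 - x$2*w$3" using c1 by (metis dvd_minus_iff minus_diff_eq)
    have c2': "p dvd x$1*w$3 - x$3*w$1" using c2 by (metis dvd_minus_iff minus_diff_eq)
    have c3': "p dvd x$2*w$1 - x$1*w$2" using c3 by (metis dvd_minus_iff minus_diff_eq)
    show ?thesis using exhaust_3[of i] exhaust_3[of l] c1 c2 c3 c1' c2' c3' by auto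
  qed
  have "p dvd w$j^2 * qform M x - x$j^2 * qform M w"
    unfolding qform_key
    by (intro dvd_sum dvd_mult dvd_add) (use D in auto)
  moreover have "p dvd x$j^2 * qform M w" using qw by simp
  ultimately have "p dvd w$j^2 * qform M x" by (metis dvd_add minus_add_cancel diff_add_cancel)
  thus ?thesis using wj p by (simp add: prime_dvd_mult_iff prime_dvd_power_iff)
qed

lemma per_prime:
  assumes p: "prime (p::int)" and sM: "symm3 M" and yk: "\<not> p dvd y$k"
    and sq: "p dvd (qform (- adjugate M) y - t^2)"
  shows "\<exists>a. \<forall>x. p dvd idot x y \<longrightarrow> p dvd idot x a \<longrightarrow> p dvd qform M x"
proof -
  obtain w j where w: "\<not> p dvd w$j" "idot w y = 0" "p dvd qform M w"
    using iso_exists[OF assms] by blast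
  have "idot (axis k 1) y = y$k" using exhaust_3[of k] by (auto simp: idot_def axis_def)
  hence hb: "\<not> p dvd idot (axis k 1) y" using yk by simp
  show ?thesis
  proof (intro exI allI impI)
    fix x assume "p dvd idot x y" "p dvd idot x (cross3 w (axis k 1))"
    thus "p dvd qform M x" using line_cond[OF p w(1) _ w(3) hb] w(2) by simp
  qed
qed



lemma sqf_prod:
  assumes "squarefree (n::nat)"
  shows "(\<Prod>p\<in>prime_factors n. p) = n"
proof -
  have n0: "n \<noteq> 0" using assms not_squarefree_0 by metis
  have "(\<Prod>p\<in>prime_factors n. p) = (\<Prod>p\<in>prime_factors n. p ^ multiplicity p n)"
    using assms n0 by (intro prod.cong refl) (simp add: squarefree_factorial_semiring')
  also have "\<dots> = n" using prod_prime_factors[OF n0] by simp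
  finally show ?thesis .
qed

lemma sqf_dvd:
  assumes sq: "squarefree (n::nat)" and h: "\<And>p. p \<in> prime_factors n \<Longrightarrow> int p dvd z"
  shows "int n dvd z"
proof (cases "z = 0")
  case True thus ?thesis by simp
next
  case False
  define m where "m = nat \<bar>z\<bar>"
  have m0: "m \<noteq> 0" using False m_def by simp
  have n0: "n \<noteq> 0" using sq not_squarefree_0 by metis
  have "n dvd m"
  proof (rule multiplicity_le_imp_dvd[OF n0])
    fix p :: nat assume p: "prime p"
    have le1: "multiplicity p n \<le> 1" using sq n0 p squarefree_factorial_semiring'' by blast
    show "multiplicity p n \<le> multiplicity p m"
    proof (cases "multiplicity p n = 0")
      case True thus ?thesis by simp
    next
      case False
      hence "p \<in> prime_factors n" using p by (simp add: prime_factors_multiplicity)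
      hence "int p dvd z" by (rule h)
      moreover have "int m = \<bar>z\<bar>" unfolding m_def by simp
      ultimately have "int p dvd int m" by simp
      hence "p ^ 1 dvd m" by simp
      hence "1 \<le> multiplicity p m" using multiplicity_geI[OF m0] p not_prime_unit by blast
      thus ?thesis using le1 by simp
    qed
  qed
  hence "int n dvd int m" by simp
  moreover have "int m = \<bar>z\<bar>" unfolding m_def by simp
  ultimately show ?thesis by simp
qed



lemma pigeon:
  fixes y' :: "int^3" and P :: "nat set" and af :: "nat \<Rightarrow> int^3" and H :: nat and S :: int
  assumes fin: "finite P" and Ppos: "\<forall>p\<in>P. p > 0" and S: "S = \<bar>y'$1\<bar> + \<bar>y'$2\<bar> + \<bar>y'$3\<bar>"
    and cnt: "nat (2*S*int H+1) * (\<Prod>p\<in>P. p) < (H+1)^3"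
  shows "\<exists>d. d \<noteq> 0 \<and> (\<forall>i. \<bar>d$i\<bar> \<le> int H) \<and> idot d y' = 0 \<and> (\<forall>p\<in>P. int p dvd idot d (af p))"
proof -
  define f :: "nat \<times> nat \<times> nat \<Rightarrow> int^3" where "f = (\<lambda>(a,b,c). vector [int a, int b, int c])"
  define A where "A = {0..H} \<times> {0..H} \<times> {0..H}"
  define B where "B = f ` A"
  have injf: "inj_on f A"
    unfolding inj_on_def f_def by (auto simp: vec_eq_iff forall_3)
  have cardB: "card B = (H+1)^3"
  proof -
    have "card B = card A" unfolding B_def by (rule card_image[OF injf])
    also have "\<dots> = (H+1)^3" unfolding A_def by (simp add: card_cartesian_product power3_eq_cube)
    finally show ?thesis .
  qed
  have Bbox: "x \<in> B \<Longrightarrow> 0 \<le> x$i \<and> x$i \<le> int H" for x i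
    unfolding B_def A_def f_def using exhaust_3[of i] by auto
  define \<phi> where "\<phi> = (\<lambda>x. (idot x y', restrict (\<lambda>p. idot x (af p) mod int p) P))"
  define T where "T = {-(S*int H)..S*int H} \<times> PiE P (\<lambda>p. {0..<int p})"
  have ST: "\<phi> ` B \<subseteq> T"
  proof
    fix z assume "z \<in> \<phi> ` B"
    then obtain x where x: "x \<in> B" "z = \<phi> x" by auto
    have b: "\<bar>x$i * y'$i\<bar> \<le> int H * \<bar>y'$i\<bar>" for i
      using Bbox[OF x(1), of i] by (simp add: abs_mult mult_right_mono)
    have "\<bar>idot x y'\<bar> \<le> \<bar>x$1 * y'$1\<bar> + \<bar>x$2 * y'$2\<bar> + \<bar>x$3 * y'$3\<bar>"
      unfolding idot_def by linarith
    also have "\<dots> \<le> int H * \<bar>y'$1\<bar> + int H * \<bar>y'$2\<bar> + int H * \<bar>y'$3\<bar>"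
      using b[of 1] b[of 2] b[of 3] by linarith
    also have "\<dots> = S * int H" unfolding S by (simp add: algebra_simps)
    finally have "\<bar>idot x y'\<bar> \<le> S * int H" .
    moreover have "restrict (\<lambda>p. idot x (af p) mod int p) P \<in> PiE P (\<lambda>p. {0..<int p})"
    proof -
      have "p \<in> P \<Longrightarrow> int p > 0" for p using Ppos by auto
      thus ?thesis by auto
    qed
    ultimately show "z \<in> T" unfolding x(2) \<phi>_def T_def by auto
  qed
  have finT: "finite T" unfolding T_def using fin by (intro finite_cartesian_product finite_PiE) auto
  have cardT: "card T = nat (2*S*int H+1) * (\<Prod>p\<in>P. p)"
    unfolding T_def card_cartesian_product card_PiE[OF fin] by (simp add: algebra_simps)
  have "\<not> inj_on \<phi> B"
  proof
    assume "inj_on \<phi> B"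
    hence "card B \<le> card T" using card_inj_on_le[OF _ ST finT] by blast
    thus False using cardB cardT cnt by simp
  qed
  then obtain x1 x2 where x: "x1 \<in> B" "x2 \<in> B" "x1 \<noteq> x2" "\<phi> x1 = \<phi> x2"
    unfolding inj_on_def by blast
  define d where "d = x1 - x2"
  have "d \<noteq> 0" using x(3) d_def by simp
  moreover have "\<bar>d$i\<bar> \<le> int H" for i using Bbox[OF x(1), of i] Bbox[OF x(2), of i] d_def by auto
  moreover have "idot d y' = 0" using x(4) unfolding d_def \<phi>_def idot_def by (simp add: algebra_simps)
  moreover have "int p dvd idot d (af p)" if "p \<in> P" for p
  proof -
    have "restrict (\<lambda>p. idot x1 (af p) mod int p) P = restrict (\<lambda>p. idot x2 (af p) mod int p) P"
      using x(4) unfolding \<phi>_def by simp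
    hence "restrict (\<lambda>p. idot x1 (af p) mod int p) P p = restrict (\<lambda>p. idot x2 (af p) mod int p) P p"
      by simp
    hence "idot x1 (af p) mod int p = idot x2 (af p) mod int p" using that by simp
    hence "int p dvd idot x1 (af p) - idot x2 (af p)" by (simp add: mod_eq_dvd_iff)
    thus ?thesis unfolding d_def idot_def by (simp add: algebra_simps)
  qed
  ultimately show ?thesis by blast
qed



lemma H_bounds:
  fixes S :: int and q1 :: nat
  assumes S1: "S \<ge> 1" and q1: "q1 > 0" and H: "H = nat \<lceil>sqrt (3 * real_of_int S * real q1)\<rceil>"
  shows "real H ^ 2 \<ge> 3 * real_of_int S * real q1" "real H ^ 2 \<le> 12 * real_of_int S * real q1"
proof -
  define z where "z = 3 * real_of_int S * real q1"
  have r1: "real_of_int S \<ge> 1" "real q1 \<ge> 1" using S1 q1 by auto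
  have "real_of_int S * real q1 \<ge> 1 * 1" using r1 by (intro mult_mono) auto
  hence z1: "z \<ge> 1" unfolding z_def by linarith
  have sz: "sqrt z \<ge> 1" using z1 by simp
  have Hr: "real H = real_of_int \<lceil>sqrt z\<rceil>" unfolding H z_def using sz z_def by simp
  have h1: "real H \<ge> sqrt z" unfolding Hr by (rule le_of_int_ceiling)
  have h2: "real H \<le> 2 * sqrt z" unfolding Hr using of_int_ceiling_le_add_one[of "sqrt z"] sz by linarith
  have "real H ^ 2 \<ge> sqrt z ^ 2" using h1 sz by (intro power_mono) auto
  thus "real H ^ 2 \<ge> 3 * real_of_int S * real q1" using z1 z_def by simp
  have "real H ^ 2 \<le> (2 * sqrt z) ^ 2" using h2 sz by (intro power_mono) auto
  thus "real H ^ 2 \<le> 12 * real_of_int S * real q1" using z1 z_def by (simp add: power_mult_distrib)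
qed

lemma aux_lin: "x - y = a + 3*b - q \<Longrightarrow> q \<le> b \<Longrightarrow> 0 \<le> a \<Longrightarrow> 0 \<le> q \<Longrightarrow> y \<le> (x::int)"
  by linarith

lemma count_part:
  fixes S :: int and q1 :: nat
  assumes S1: "S \<ge> 1" and q1: "q1 > 0" and H: "H = nat \<lceil>sqrt (3 * real_of_int S * real q1)\<rceil>"
  shows "nat (2*S*int H+1) * q1 < (H+1)^3"
proof -
  have "real H ^ 2 \<ge> 3 * real_of_int S * real q1" using H_bounds[OF assms] by simp
  hence hi: "int H ^ 2 \<ge> 3 * S * int q1"
    by (metis (mono_tags) of_int_le_iff of_int_mult of_int_numeral of_int_of_nat_eq of_int_power)
  define h where "h = int H"
  define Q where "Q = int q1"
  have h0: "h \<ge> 0" and Q0: "Q \<ge> 1" using q1 by (auto simp: h_def Q_def)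
  have a: "(h+1)*h^2 \<ge> (h+1)*(3*S*Q)" using hi h0 unfolding h_def Q_def by (intro mult_left_mono) auto
  have hh: "h*(h*2) \<ge> 0" using h0 by simp
  have "(h+1)^3 - (h+1)*h^2 = 1 + h*3 + h*(h*2)" by (simp add: power2_eq_square power3_eq_cube algebra_simps)
  hence b: "(h+1)^3 > (h+1)*h^2" using hh h0 by linarith
  have sq: "S*Q \<ge> Q" using S1 Q0 by simp
  have shq: "S*h*Q \<ge> 0" using S1 Q0 h0 by simp
  have eqc: "(h+1)*(3*S*Q) - (2*S*h+1)*Q = S*h*Q + 3*(S*Q) - Q" by (simp add: algebra_simps)
  have c: "(h+1)*(3*S*Q) \<ge> (2*S*h+1)*Q" using aux_lin[OF eqc sq shq] Q0 by simp
  have "(2*S*h+1)*Q < (h+1)^3" using a b c by linarith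
  moreover have "int (nat (2*S*int H+1) * q1) = (2*S*h+1)*Q"
    using S1 h0 unfolding h_def Q_def by simp
  ultimately have "int (nat (2*S*int H+1) * q1) < int ((H+1)^3)" unfolding h_def by (simp add: add.commute)
  thus ?thesis by linarith
qed



lemma inorm3: "inorm (x::int^3) = sqrt (real_of_int (x$1)^2 + real_of_int (x$2)^2 + real_of_int (x$3)^2)"
  unfolding inorm_def by (simp add: sum_3)

lemma inorm_sq: "inorm (x::int^3) ^ 2 = real_of_int (x$1)^2 + real_of_int (x$2)^2 + real_of_int (x$3)^2"
  unfolding inorm3 by (simp add: add_nonneg_nonneg)

lemma inorm_nonneg: "inorm x \<ge> 0"
  unfolding inorm_def by (simp add: sum_nonneg)

lemma inorm_ge: "\<bar>real_of_int (x$i)\<bar> \<le> inorm (x::int^3)"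
proof -
  have "real_of_int (x$i)^2 \<le> real_of_int (x$1)^2 + real_of_int (x$2)^2 + real_of_int (x$3)^2"
    using exhaust_3[of i] by auto
  hence "sqrt (real_of_int (x$i)^2) \<le> inorm x" unfolding inorm3 by (rule real_sqrt_le_mono)
  thus ?thesis by simp
qed

lemma inorm_smult: "inorm (c *s (x::int^3)) = \<bar>real_of_int c\<bar> * inorm x"
proof -
  have "inorm (c *s x) = sqrt (real_of_int c ^2 * (real_of_int (x$1)^2 + real_of_int (x$2)^2 + real_of_int (x$3)^2))"
    unfolding inorm3 by (simp add: power_mult_distrib algebra_simps)
  thus ?thesis unfolding inorm3 by (simp add: real_sqrt_mult)
qed

lemma norm_part:
  fixes d y' :: "int^3" and H q1 q2 :: nat and S G :: int
  assumes d: "\<forall>i. \<bar>d$i\<bar> \<le> int H" and S: "S = \<bar>y'$1\<bar> + \<bar>y'$2\<bar> + \<bar>y'$3\<bar>" and S1: "S \<ge> 1"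
    and q1: "q1 > 0" and H: "H = nat \<lceil>sqrt (3 * real_of_int S * real q1)\<rceil>"
    and qG: "int q2 \<le> G"
  shows "inorm (int q2 *s d) \<le> 11 * sqrt (real (q1*q2)) * sqrt (inorm (G *s y'))"
proof -
  have di: "real_of_int (d$i)^2 \<le> real H^2" for i
  proof -
    have "\<bar>real_of_int (d$i)\<bar> \<le> real H" using d by (metis of_int_abs of_int_le_iff of_int_of_nat_eq)
    hence "\<bar>real_of_int (d$i)\<bar>^2 \<le> real H^2" by (intro power_mono) auto
    thus ?thesis by simp
  qed
  have "inorm (int q2 *s d) ^ 2 = real q2^2 * (real_of_int (d$1)^2 + real_of_int (d$2)^2 + real_of_int (d$3)^2)"
    unfolding inorm_sq by (simp add: power_mult_distrib algebra_simps)
  also have "\<dots> \<le> real q2^2 * (3 * real H^2)"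
    using di[of 1] di[of 2] di[of 3] by (intro mult_left_mono) auto
  also have "\<dots> \<le> real q2^2 * (3 * (12 * real_of_int S * real q1))"
    using H_bounds(2)[OF S1 q1 H] by (intro mult_left_mono) auto
  also have "\<dots> \<le> real q2^2 * (36 * (3 * inorm y') * real q1)"
  proof -
    have "real_of_int S \<le> 3 * inorm y'"
      using inorm_ge[of y' 1] inorm_ge[of y' 2] inorm_ge[of y' 3] unfolding S by simp
    hence "real_of_int S * real q1 \<le> (3 * inorm y') * real q1" by (rule mult_right_mono) auto
    hence "real q2^2 * (36 * (real_of_int S * real q1)) \<le> real q2^2 * (36 * ((3 * inorm y') * real q1))"
      by (intro mult_left_mono) auto
    thus ?thesis by (simp add: algebra_simps)
  qed
  also have "\<dots> = 108 * real (q1*q2) * (real q2 * inorm y')"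
    by (simp add: power2_eq_square algebra_simps)
  also have "\<dots> \<le> 108 * real (q1*q2) * (real_of_int G * inorm y')"
  proof -
    have "real q2 \<le> real_of_int G" using qG by (metis of_int_le_iff of_int_of_nat_eq)
    moreover have "inorm y' \<ge> 0" by (rule inorm_nonneg)
    ultimately show ?thesis by (intro mult_left_mono mult_right_mono) auto
  qed
  also have "\<dots> = 108 * real (q1*q2) * inorm (G *s y')"
    using qG unfolding inorm_smult by simp
  also have "\<dots> \<le> 121 * real (q1*q2) * inorm (G *s y')"
    by (intro mult_right_mono) (auto simp: inorm_nonneg)
  finally have "inorm (int q2 *s d) \<le> sqrt (121 * real (q1*q2) * inorm (G *s y'))"
    by (rule real_le_rsqrt)
  also have "\<dots> = 11 * sqrt (real (q1*q2)) * sqrt (inorm (G *s y'))"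
    by (simp add: real_sqrt_mult)
  finally show ?thesis .
qed



lemma core:
  fixes q :: nat and M :: "int^3^3" and y :: "int^3" and t :: int
  assumes sq: "squarefree q" and sM: "symm3 M" and y0: "y \<noteq> 0"
    and ht: "[qform (- adjugate M) y = t^2] (mod int q)"
  shows "\<exists>x. x \<noteq> 0 \<and> [qform M x = 0] (mod int q) \<and> inorm x \<le> 11 * sqrt (real q) * sqrt (inorm y)"
proof -
  have q0: "q > 0" using sq not_squarefree_0 by (metis gr0I)
  define G where "G = gcd (gcd (y$1) (y$2)) (y$3)"
  have Gdvd: "G dvd y$i" for i
    unfolding G_def using exhaust_3[of i]
    by (metis dvd_trans gcd_dvd1 gcd_dvd2)
  have G0: "G > 0"
  proof -
    have "G \<noteq> 0"
    proof
      assume "G = 0"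
      hence "y$1 = 0" "y$2 = 0" "y$3 = 0" unfolding G_def by auto
      hence "y = 0" by (simp add: vec_eq_iff forall_3)
      thus False using y0 by simp
    qed
    moreover have "G \<ge> 0" unfolding G_def by simp
    ultimately show ?thesis by simp
  qed
  define y' where "y' = (\<chi> i. y$i div G)"
  have yy: "y = G *s y'" unfolding y'_def using Gdvd by (simp add: vec_eq_iff)
  have y'0: "y' \<noteq> 0" using yy y0 by auto
  define g2 where "g2 = gcd (int q) G"
  define q2 where "q2 = nat g2"
  have g2pos: "g2 > 0" unfolding g2_def using q0 by simp
  have iq2: "int q2 = g2" unfolding q2_def using g2pos by simp
  have q2q: "q2 dvd q"
  proof -
    have "int q2 dvd int q" unfolding iq2 g2_def by simp
    thus ?thesis by simp
  qed
  have q2G: "int q2 \<le> G" unfolding iq2 g2_def using G0 by (simp add: zdvd_imp_le)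
  define q1 where "q1 = q div q2"
  have qq: "q = q1 * q2" unfolding q1_def using q2q by simp
  have q1pos: "q1 > 0" using qq q0 by (metis gr0I mult_0)
  have sq1: "squarefree q1" using sq qq by (metis dvd_triv_left squarefree_mono)
  define P where "P = prime_factors q1"
  have finP: "finite P" unfolding P_def by simp
  have pP: "prime p \<and> p dvd q1" if "p \<in> P" for p using that unfolding P_def by (simp add: in_prime_factors_iff)
  have notG: "\<not> int p dvd G" if "p \<in> P" for p
  proof
    assume pG: "int p dvd G"
    have "p dvd q" using pP[OF that] qq by simp
    hence "int p dvd int q" by simp
    hence "int p dvd g2" unfolding g2_def using pG by simp
    hence "p dvd q2" using iq2 by (metis int_dvd_int_iff)
    hence "p^2 dvd q" unfolding qq power2_eq_square using pP[OF that] by (simp add: mult_dvd_mono)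
    hence "p dvd 1" using sq squarefreeD by blast
    thus False using pP[OF that] by simp
  qed
  have exk: "\<exists>k. \<not> int p dvd y$k" if "p \<in> P" for p
  proof (rule ccontr)
    assume "\<not> (\<exists>k. \<not> int p dvd y$k)"
    hence "int p dvd y$1" "int p dvd y$2" "int p dvd y$3" by auto
    hence "int p dvd G" unfolding G_def by simp
    thus False using notG[OF that] by simp
  qed
  have sqp: "int p dvd (qform (- adjugate M) y - t^2)" if "p \<in> P" for p
  proof -
    have "int q dvd (qform (- adjugate M) y - t^2)" using ht by (simp add: cong_iff_dvd_diff)
    moreover have "int p dvd int q" using pP[OF that] qq by simp
    ultimately show ?thesis by (rule dvd_trans[rotated])
  qed
  have "\<forall>p\<in>P. \<exists>a. \<forall>x. int p dvd idot x y \<longrightarrow> int p dvd idot x a \<longrightarrow> int p dvd qform M x"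
  proof
    fix p assume p: "p \<in> P"
    obtain k where k: "\<not> int p dvd y$k" using exk[OF p] by blast
    have "prime (int p)" using pP[OF p] by simp
    thus "\<exists>a. \<forall>x. int p dvd idot x y \<longrightarrow> int p dvd idot x a \<longrightarrow> int p dvd qform M x"
      using per_prime[OF _ sM k sqp[OF p]] by blast
  qed
  then obtain af where af: "\<forall>p\<in>P. \<forall>x. int p dvd idot x y \<longrightarrow> int p dvd idot x (af p) \<longrightarrow> int p dvd qform M x"
    by metis
  define S where "S = \<bar>y'$1\<bar> + \<bar>y'$2\<bar> + \<bar>y'$3\<bar>"
  have S1: "S \<ge> 1"
  proof (rule ccontr)
    assume "\<not> S \<ge> 1"
    hence "y'$1 = 0" "y'$2 = 0" "y'$3 = 0" unfolding S_def by auto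
    hence "y' = 0" by (simp add: vec_eq_iff forall_3)
    thus False using y'0 by simp
  qed
  define H where "H = nat \<lceil>sqrt (3 * real_of_int S * real q1)\<rceil>"
  have cnt: "nat (2*S*int H+1) * (\<Prod>p\<in>P. p) < (H+1)^3"
    unfolding P_def sqf_prod[OF sq1] using count_part[OF S1 q1pos H_def] .
  have Ppos: "\<forall>p\<in>P. p > 0" using pP by (auto simp: prime_gt_0_nat)
  obtain d where d: "d \<noteq> 0" "\<forall>i. \<bar>d$i\<bar> \<le> int H" "idot d y' = 0" "\<forall>p\<in>P. int p dvd idot d (af p)"
    using pigeon[OF finP Ppos S_def cnt, of af] by blast
  have "idot d y = G * idot d y'" unfolding yy by (simp add: idot_def algebra_simps)
  hence dy: "idot d y = 0" using d(3) by simp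
  have "int q1 dvd qform M d"
  proof (rule sqf_dvd[OF sq1])
    fix p assume "p \<in> prime_factors q1"
    hence p: "p \<in> P" unfolding P_def .
    thus "int p dvd qform M d" using af d(4) dy by simp
  qed
  then obtain k where k: "qform M d = int q1 * k" by (auto elim: dvdE)
  define x where "x = int q2 *s d"
  have "x \<noteq> 0"
  proof
    assume "x = 0"
    hence "int q2 * d$i = 0" for i unfolding x_def by (metis vector_smult_component zero_index)
    hence "d$i = 0" for i using g2pos iq2 by simp
    thus False using d(1) by (simp add: vec_eq_iff)
  qed
  moreover have "[qform M x = 0] (mod int q)"
  proof -
    have "qform M x = int q * (int q2 * k)" unfolding x_def qform_smult k qq by (simp add: power2_eq_square algebra_simps)
    thus ?thesis by (simp add: cong_0_iff)
  qed
  moreover have "inorm x \<le> 11 * sqrt (real q) * sqrt (inorm y)"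
    unfolding x_def yy qq using norm_part[OF d(2) S_def S1 q1pos H_def q2G] .
  ultimately show ?thesis by blast
qed



lemma det_neg3: "det (- A) = - det (A::int^3^3)"
  unfolding det_3 by (simp add: algebra_simps)

lemma adm_adj:
  assumes "admissible M q"
  shows "admissible (- adjugate (M::int^3^3)) q"
proof -
  have tM: "transpose M = M" and cp: "coprime (det M) (int q)" using assms unfolding admissible_def by auto
  have sM: "symm3 M" using tM by (rule transpose_symm3)
  have s: "M$2$1 = M$1$2" "M$3$1 = M$1$3" "M$3$2 = M$2$3" using sM unfolding symm3_def by auto
  have "transpose (- adjugate M) = - adjugate M"
    by (simp add: vec_eq_iff forall_3 transpose_def adj3 s algebra_simps)
  moreover have "coprime (det (- adjugate M)) (int q)"
  proof (cases "det M = 0")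
    case True
    hence "is_unit (int q)" using cp by simp
    thus ?thesis by simp
  next
    case False
    have "det M * det (adjugate M) = det M * (det M)^2" using det_adj_mult[of M]
      by (simp add: power2_eq_square power3_eq_cube)
    hence "det (adjugate M) = (det M)^2" using False by simp
    hence "det (- adjugate M) = - ((det M)^2)" by (simp add: det_neg3)
    thus ?thesis using cp by simp
  qed
  ultimately show ?thesis unfolding admissible_def by simp
qed

definition e1q :: "nat \<Rightarrow> int^3" where "e1q q = vector [int q, 0, 0]"

lemma e1q_props:
  assumes "q > 0"
  shows "e1q q \<noteq> 0" "[qform N (e1q q) = 0] (mod int q)" "inorm (e1q q) = real q"
    "\<exists>t::int. [qform N (e1q q) = t^2] (mod int q)"
proof -
  show "\<exists>t::int. [qform N (e1q q) = t^2] (mod int q)"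
    by (rule exI[of _ 0]) (simp add: qform3 e1q_def cong_0_iff)
  show "e1q q \<noteq> 0" using assms unfolding e1q_def by (metis vector_3(1) zero_index of_nat_eq_0_iff gr_implies_not0)
  show "[qform N (e1q q) = 0] (mod int q)" unfolding qform3 e1q_def by (simp add: cong_0_iff)
  show "inorm (e1q q) = real q" unfolding inorm3 e1q_def by simp
qed

lemma mQ_nonneg:
  assumes "q > 0"
  shows "mQ (M::int^3^3) q \<ge> 0"
proof -
  have "e1q q \<noteq> 0 \<and> [qform (M::int^3^3) (e1q q) = 0] (mod int q)" using e1q_props[OF assms] by blast
  hence ne: "{inorm x | x. x \<noteq> 0 \<and> [qform M x = 0] (mod int q)} \<noteq> {}" by blast
  show ?thesis unfolding mQ_def
    by (rule cInf_greatest[OF ne]) (auto simp: inorm_nonneg)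
qed

lemma mhat_le_q:
  assumes "q > 0"
  shows "mhatQ (N::int^3^3) q \<le> real q"
proof -
  have "e1q q \<noteq> 0 \<and> (\<exists>t::int. [qform N (e1q q) = t^2] (mod int q))"
    using e1q_props[OF assms] by auto
  hence "inorm (e1q q) \<in> {inorm x | x. x \<noteq> 0 \<and> (\<exists>t::int. [qform N x = t^2] (mod int q))}" by blast
  moreover have "bdd_below {inorm x | x::int^3. x \<noteq> 0 \<and> (\<exists>t::int. [qform N x = t^2] (mod int q))}"
    by (rule bdd_belowI[of _ 0]) (auto simp: inorm_nonneg)
  ultimately have "mhatQ N q \<le> inorm (e1q q)" unfolding mhatQ_def by (rule cInf_lower)
  thus ?thesis using e1q_props[OF assms] by simp
qed

lemma part1:
  assumes sq: "squarefree q" and adm: "admissible M q"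
  shows "mQ (M::int^3^3) q \<le> 11 * sqrt (real q) * sqrt (mhatQ (- adjugate M) q)"
proof -
  have q0: "q > 0" using sq not_squarefree_0 by (metis gr0I)
  have sM: "symm3 M" using adm unfolding admissible_def by (simp add: transpose_symm3)
  define Z where "Z = {inorm x | x::int^3. x \<noteq> 0 \<and> [qform M x = 0] (mod int q)}"
  define Hs where "Hs = {inorm x | x::int^3. x \<noteq> 0 \<and> (\<exists>t::int. [qform (- adjugate M) x = t^2] (mod int q))}"
  have bZ: "bdd_below Z" unfolding Z_def by (rule bdd_belowI[of _ 0]) (auto simp: inorm_nonneg)
  have m0: "mQ M q \<ge> 0" by (rule mQ_nonneg[OF q0])
  have "Hs \<noteq> {}"
  proof -
    have "inorm (e1q q) \<in> Hs" unfolding Hs_def using e1q_props[OF q0] by force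
    thus ?thesis by blast
  qed
  moreover have "(mQ M q)^2 / (121 * real q) \<le> h" if "h \<in> Hs" for h
  proof -
    obtain y t where y: "h = inorm y" "y \<noteq> 0" "[qform (- adjugate M) y = t^2] (mod int q)"
      using \<open>h \<in> Hs\<close> unfolding Hs_def by blast
    obtain x where x: "x \<noteq> 0" "[qform M x = 0] (mod int q)" "inorm x \<le> 11 * sqrt (real q) * sqrt (inorm y)"
      using core[OF sq sM y(2) y(3)] by blast
    have "mQ M q \<le> inorm x" unfolding mQ_def Z_def[symmetric]
      by (rule cInf_lower[OF _ bZ]) (use x in \<open>auto simp: Z_def\<close>)
    hence "mQ M q \<le> 11 * sqrt (real q) * sqrt h" using x(3) y(1) by simp
    hence "(mQ M q)^2 \<le> (11 * sqrt (real q) * sqrt h)^2" using m0 by (intro power_mono) auto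
    also have "\<dots> = 121 * real q * h" using y(1) by (simp add: power_mult_distrib inorm_nonneg)
    finally show ?thesis using q0 by (simp add: divide_le_eq mult.commute)
  qed
  ultimately have "(mQ M q)^2 / (121 * real q) \<le> Inf Hs" by (rule cInf_greatest)
  hence "(mQ M q)^2 \<le> 121 * real q * mhatQ (- adjugate M) q"
    using q0 unfolding mhatQ_def Hs_def[symmetric] by (simp add: divide_le_eq mult.commute)
  hence "mQ M q \<le> sqrt (121 * real q * mhatQ (- adjugate M) q)" by (rule real_le_rsqrt)
  thus ?thesis by (simp add: real_sqrt_mult)
qed

theorem lemma1:
  "\<exists>C>0. (\<forall>(q::nat) (M::int^3^3). odd q \<and> squarefree q \<and> admissible M q \<longrightarrow>
            mQ M q \<le> C * sqrt (real q) * sqrt (mhatQ (- adjugate M) q))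
       \<and> (\<forall>q::nat. odd q \<and> squarefree q \<longrightarrow>
            B3star q \<le> C * sqrt (real q) * sqrt (Bhat3 q))"
proof (intro exI[of _ 11] conjI allI impI)
  show "(0::real) < 11" by simp
  fix q :: nat and M :: "int^3^3"
  assume "odd q \<and> squarefree q \<and> admissible M q"
  thus "mQ M q \<le> 11 * sqrt (real q) * sqrt (mhatQ (- adjugate M) q)" using part1 by blast
next
  fix q :: nat
  assume h: "odd q \<and> squarefree q"
  hence sq: "squarefree q" by simp
  have q0: "q > 0" using sq not_squarefree_0 by (metis gr0I)
  define A where "A = {mQ (M::int^3^3) q | M. admissible M q}"
  define Bs where "Bs = {mhatQ (M::int^3^3) q | M. admissible M q}"
  have bB: "bdd_above Bs" unfolding Bs_def by (rule bdd_aboveI[of _ "real q"]) (auto simp: mhat_le_q[OF q0])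
  have "admissible (mat 1 :: int^3^3) q" unfolding admissible_def using det_scal[of 1] by simp
  hence "A \<noteq> {}" unfolding A_def by blast
  moreover have "a \<le> 11 * sqrt (real q) * sqrt (Bhat3 q)" if aA: "a \<in> A" for a
  proof -
    obtain M :: "int^3^3" where M: "a = mQ M q" "admissible M q" using aA unfolding A_def by blast
    have "mhatQ (- adjugate M) q \<le> Bhat3 q" unfolding Bhat3_def Bs_def[symmetric]
      by (rule cSup_upper[OF _ bB]) (use adm_adj[OF M(2)] in \<open>auto simp: Bs_def\<close>)
    hence "sqrt (mhatQ (- adjugate M) q) \<le> sqrt (Bhat3 q)" by simp
    hence "11 * sqrt (real q) * sqrt (mhatQ (- adjugate M) q) \<le> 11 * sqrt (real q) * sqrt (Bhat3 q)"
      by (intro mult_left_mono) auto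
    thus ?thesis using part1[OF sq M(2)] M(1) by linarith
  qed
  ultimately have "Sup A \<le> 11 * sqrt (real q) * sqrt (Bhat3 q)" by (rule cSup_least)
  thus "B3star q \<le> 11 * sqrt (real q) * sqrt (Bhat3 q)" unfolding B3star_def A_def .
qed


end
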